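(* Let $K\ge 2$ and let the global alphabet be $\mathcal{A}=[K]=\{1,\dots,K\}$. Let $\Omega_1,\Omega_2\subseteq[K]$ be the (random) sets of parties $P_1$ and $P_2$, and assume $|\Omega_2|$ is fixed and publicly known. Consider any protocol in which $P_2$ sends queries $Q^{[\Omega_2]}_{n}$ to the $N_1$ databases of $P_1$, and database $n$ returns an answer $A^{[\Omega_2]}_n$ satisfying $H(A^{[\Omega_2]}_n\mid Q^{[\Omega_2]}_n,\Omega_1,\mathcal{R}_S)=0$, where $\mathcal{R}_S$ is common randomness shared by $P_1$'s databases. Define the one-symbol messages $W_k=\mathbf{1}\{k\in\Omega_1\}$, $k\in[K]$ (so $L=1$), and the desired index set $\Omega=[K]\setminus\Omega_2$, so $|\Omega|=P=K-|\Omega_2|$. Then the protocol satisfies the three PSU constraints (i) PSU reliability: $H(\Omega_1\cup\Omega_2\mid Q^{[\mathcal{P}_2]}_{[N_1]},A^{[\mathcal{P}_2]}_{[N_1]},\Omega_2)=0$ for every realization $\mathcal{P}_2$; (ii) $P_2$ privacy: $I(\Omega_2;Q^{[\Omega_2]}_{n},A^{[\Omega_2]}_{n},\Omega_1,\mathcal{R}_S)=0$ for all $n\in[N_1]$; (iii) $P_1$ privacy: $I(E_{1,\Omega_2};Q^{[\mathcal{P}_2]}_{[N_1]},A^{[\mathcal{P}_2]}_{[N_1]},\Omega_2)=0$ for every realization $\mathcal{P}_2$, where $E_{1,\Omega_2}=(\mathbf{1}\{k\in\Omega_1\})_{k\in\Omega_2}$; if and only if, viewed as a multi-message symmetric PIR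 protocol with messages $W_{[K]}$ and desired set $\Omega$, it satisfies (i') MM-SPIR reliability: $H(W_{\mathcal{P}}\mid Q_{[N_1]}^{[\mathcal{P}]},A_{[N_1]}^{[\mathcal{P}]},\mathcal{P})=0$ for every realization $\mathcal{P}$ of $\Omega$; (ii') user privacy: $I(\Omega;Q_n^{[\Omega]},A_n^{[\Omega]},W_{[K]},\mathcal{R}_S)=0$ for all $n$; (iii') database privacy: $I(W_{[K]\setminus\mathcal{P}};Q_{[N_1]}^{[\mathcal{P}]},A_{[N_1]}^{[\mathcal{P}]},\mathcal{P})=0$ for every realization $\mathcal{P}$. In this sense PSU is equivalent to MM-SPIR with $L=1$ and $P=|\mathcal{A}|-|\Omega_2|$.
   Context: Notation: $[Z]=\{1,\dots,Z\}$. For a set $\mathcal{S}$ of indices, $W_{\mathcal{S}}=\{W_k:k\in\mathcal{S}\}$. Party $P_2$ (the querying party) generates queries without knowledge of $\Omega_1$; $P_1$'s $N_1$ databases store $\Omega_1$ in replicated form, do not collude, and share common randomness $\mathcal{R}_S$ unknown to $P_2$. *)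

theory Defs
  imports "HOL-Probability.Probability_Mass_Function"
begin

definition joint_pmf :: "'w pmf \<Rightarrow> ('w \<Rightarrow> 'x) \<Rightarrow> ('w \<Rightarrow> 'y) \<Rightarrow> ('x \<times> 'y) pmf" where
  "joint_pmf \<mu> X Y = map_pmf (\<lambda>\<omega>. (X \<omega>, Y \<omega>)) \<mu>"

definition cond_entropy :: "'w pmf \<Rightarrow> ('w \<Rightarrow> 'x) \<Rightarrow> ('w \<Rightarrow> 'y) \<Rightarrow> real" where
  "cond_entropy \<mu> X Y =
     - (\<Sum>(x, y) \<in> set_pmf (joint_pmf \<mu> X Y).
          pmf (joint_pmf \<mu> X Y) (x, y) *
          log 2 (pmf (joint_pmf \<mu> X Y) (x, y) / pmf (map_pmf Y \<mu>) y))"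

definition mutual_info :: "'w pmf \<Rightarrow> ('w \<Rightarrow> 'x) \<Rightarrow> ('w \<Rightarrow> 'y) \<Rightarrow> real" where
  "mutual_info \<mu> X Y =
     (\<Sum>(x, y) \<in> set_pmf (joint_pmf \<mu> X Y).
          pmf (joint_pmf \<mu> X Y) (x, y) *
          log 2 (pmf (joint_pmf \<mu> X Y) (x, y) / (pmf (map_pmf X \<mu>) x * pmf (map_pmf Y \<mu>) y)))"

end

theory Submission
  imports Defs
begin



lemma cond_pmf_cong':
  assumes "set_pmf p \<inter> A \<noteq> {}" "A \<inter> set_pmf p = B \<inter> set_pmf p"
  shows "cond_pmf p A = cond_pmf p B"
proof (rule pmf_eqI)
  fix x
  have nB: "set_pmf p \<inter> B \<noteq> {}" using assms by blast
  have "measure p A = measure p (A \<inter> set_pmf p)" by (rule measure_Int_set_pmf[symmetric])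
  also have "\<dots> = measure p (B \<inter> set_pmf p)" using assms(2) by (rule arg_cong)
  also have "\<dots> = measure p B" by (rule measure_Int_set_pmf)
  finally have m: "measure p A = measure p B" .
  show "pmf (cond_pmf p A) x = pmf (cond_pmf p B) x"
  proof (cases "x \<in> set_pmf p")
    case True
    then have "x \<in> A \<longleftrightarrow> x \<in> B" using assms(2) by blast
    then show ?thesis unfolding pmf_cond[OF assms(1)] pmf_cond[OF nB] m by simp
  next
    case False
    then have z: "pmf p x = 0" by (simp add: set_pmf_eq)
    show ?thesis unfolding pmf_cond[OF assms(1)] pmf_cond[OF nB] z by simp
  qed
qed

lemma diff_inj_aux: "D - U = D - V \<Longrightarrow> U \<subseteq> D \<Longrightarrow> V \<subseteq> D \<Longrightarrow> U = V"
  by blast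

lemma map_pmf_eq_on: "(\<And>\<omega>. \<omega> \<in> set_pmf \<mu> \<Longrightarrow> f \<omega> = g \<omega>) \<Longrightarrow> map_pmf f \<mu> = map_pmf g \<mu>"
  by (rule map_pmf_cong) auto

lemma info_inj:
  fixes \<mu> :: "'w pmf" and X :: "'w \<Rightarrow> 'x" and Y :: "'w \<Rightarrow> 'y" and X' :: "'w \<Rightarrow> 'x2" and Y' :: "'w \<Rightarrow> 'y2"
  assumes fi: "inj_on f (X ` set_pmf \<mu>)" and gi: "inj_on g (Y ` set_pmf \<mu>)"
    and fX: "\<And>\<omega>. \<omega> \<in> set_pmf \<mu> \<Longrightarrow> X' \<omega> = f (X \<omega>)"
    and gY: "\<And>\<omega>. \<omega> \<in> set_pmf \<mu> \<Longrightarrow> Y' \<omega> = g (Y \<omega>)"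
  shows "cond_entropy \<mu> X' Y' = cond_entropy \<mu> X Y \<and> mutual_info \<mu> X' Y' = mutual_info \<mu> X Y"
proof -
  let ?J = "joint_pmf \<mu> X Y"
  let ?h = "map_prod f g"
  have J: "joint_pmf \<mu> X' Y' = map_pmf ?h ?J"
    unfolding joint_pmf_def pmf.map_comp o_def using fX gY by (intro map_pmf_eq_on) auto
  have MX: "map_pmf X' \<mu> = map_pmf f (map_pmf X \<mu>)"
    unfolding pmf.map_comp o_def using fX by (intro map_pmf_eq_on) auto
  have MY: "map_pmf Y' \<mu> = map_pmf g (map_pmf Y \<mu>)"
    unfolding pmf.map_comp o_def using gY by (intro map_pmf_eq_on) auto
  have SJ: "set_pmf ?J = (\<lambda>\<omega>. (X \<omega>, Y \<omega>)) ` set_pmf \<mu>" by (simp add: joint_pmf_def)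
  have hi: "inj_on ?h (set_pmf ?J)"
    unfolding SJ using fi gi by (auto simp: inj_on_def)
  have fi': "inj_on f (set_pmf (map_pmf X \<mu>))" using fi by simp
  have gi': "inj_on g (set_pmf (map_pmf Y \<mu>))" using gi by simp
  have key: "\<And>x y. (x, y) \<in> set_pmf ?J \<Longrightarrow>
      pmf (map_pmf ?h ?J) (f x, g y) = pmf ?J (x, y) \<and>
      pmf (map_pmf f (map_pmf X \<mu>)) (f x) = pmf (map_pmf X \<mu>) x \<and>
      pmf (map_pmf g (map_pmf Y \<mu>)) (g y) = pmf (map_pmf Y \<mu>) y"
  proof -
    fix x y assume xy: "(x, y) \<in> set_pmf ?J"
    have "x \<in> set_pmf (map_pmf X \<mu>)" "y \<in> set_pmf (map_pmf Y \<mu>)" using xy SJ by auto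
    then show "?thesis x y"
      using pmf_map_inj[OF hi xy] pmf_map_inj[OF fi'] pmf_map_inj[OF gi'] by simp
  qed
  have S: "set_pmf (map_pmf ?h ?J) = ?h ` set_pmf ?J" by simp
  show ?thesis
    unfolding cond_entropy_def mutual_info_def J MX MY S
    by (simp_all add: sum.reindex[OF hi]) (intro conjI sum.cong refl; auto simp: key)
qed


theorem theorem1:
  fixes \<mu> :: "'w pmf" and K N1 :: nat and \<Omega>1 \<Omega>2 :: "'w \<Rightarrow> nat set"
    and Q :: "nat \<Rightarrow> 'w \<Rightarrow> 'q" and A :: "nat \<Rightarrow> 'w \<Rightarrow> 'a" and RS :: "'w \<Rightarrow> 'r"
  defines "W \<equiv> \<lambda>k \<omega>. if k \<in> \<Omega>1 \<omega> then 1 else (0::nat)"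
    and "E \<equiv> \<lambda>\<omega>. restrict (\<lambda>k. if k \<in> \<Omega>1 \<omega> then 1 else (0::nat)) (\<Omega>2 \<omega>)"
    and "\<Omega> \<equiv> \<lambda>\<omega>. {1..K} - \<Omega>2 \<omega>"
    and "QA \<equiv> \<lambda>\<omega>. (map (\<lambda>n. Q n \<omega>) [1..<N1+1], map (\<lambda>n. A n \<omega>) [1..<N1+1])"
  assumes "K \<ge> 2" and "N1 \<ge> 1" and "finite (set_pmf \<mu>)"
    and "\<forall>\<omega>\<in>set_pmf \<mu>. \<Omega>1 \<omega> \<subseteq> {1..K} \<and> \<Omega>2 \<omega> \<subseteq> {1..K}"
    and "\<exists>c. \<forall>\<omega>\<in>set_pmf \<mu>. card (\<Omega>2 \<omega>) = c"
    and "\<forall>n\<in>{1..N1}. cond_entropy \<mu> (A n) (\<lambda>\<omega>. (Q n \<omega>, \<Omega>1 \<omega>, RS \<omega>)) = 0"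
  shows
   "((\<forall>P2 \<in> \<Omega>2 ` set_pmf \<mu>.
        cond_entropy (cond_pmf \<mu> {\<omega>. \<Omega>2 \<omega> = P2}) (\<lambda>\<omega>. \<Omega>1 \<omega> \<union> \<Omega>2 \<omega>) (\<lambda>\<omega>. (QA \<omega>, \<Omega>2 \<omega>)) = 0)
     \<and> (\<forall>n\<in>{1..N1}. mutual_info \<mu> \<Omega>2 (\<lambda>\<omega>. (Q n \<omega>, A n \<omega>, \<Omega>1 \<omega>, RS \<omega>)) = 0)
     \<and> (\<forall>P2 \<in> \<Omega>2 ` set_pmf \<mu>.
        mutual_info (cond_pmf \<mu> {\<omega>. \<Omega>2 \<omega> = P2}) E (\<lambda>\<omega>. (QA \<omega>, \<Omega>2 \<omega>)) = 0))
    \<longleftrightarrow>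
    ((\<forall>P \<in> \<Omega> ` set_pmf \<mu>.
        cond_entropy (cond_pmf \<mu> {\<omega>. \<Omega> \<omega> = P}) (\<lambda>\<omega>. restrict (\<lambda>k. W k \<omega>) P) (\<lambda>\<omega>. (QA \<omega>, \<Omega> \<omega>)) = 0)
     \<and> (\<forall>n\<in>{1..N1}. mutual_info \<mu> \<Omega> (\<lambda>\<omega>. (Q n \<omega>, A n \<omega>, restrict (\<lambda>k. W k \<omega>) {1..K}, RS \<omega>)) = 0)
     \<and> (\<forall>P \<in> \<Omega> ` set_pmf \<mu>.
        mutual_info (cond_pmf \<mu> {\<omega>. \<Omega> \<omega> = P}) (\<lambda>\<omega>. restrict (\<lambda>k. W k \<omega>) ({1..K} - P)) (\<lambda>\<omega>. (QA \<omega>, \<Omega> \<omega>)) = 0))"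
  proof -
  let ?S = "set_pmf \<mu>"
  note sub = assms(8)
  have restr_inj: "\<And>U V D. restrict (\<lambda>k. if k \<in> U then 1 else (0::nat)) D = restrict (\<lambda>k. if k \<in> V then 1 else (0::nat)) D
      \<Longrightarrow> k \<in> D \<Longrightarrow> (k \<in> U \<longleftrightarrow> k \<in> V)" for k
  proof -
    fix U V D assume h: "restrict (\<lambda>k. if k \<in> U then 1 else (0::nat)) D = restrict (\<lambda>k. if k \<in> V then 1 else (0::nat)) D" and kD: "k \<in> D"
    from fun_cong[OF h, of k] kD show "k \<in> U \<longleftrightarrow> k \<in> V" by (auto split: if_splits)
  qed
  have imgO: "\<Omega> ` ?S = (\<lambda>P2. {1..K} - P2) ` (\<Omega>2 ` ?S)"
    unfolding \<Omega>_def by (simp add: image_image)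
  have per: "cond_entropy (cond_pmf \<mu> {\<omega>. \<Omega>2 \<omega> = P2}) (\<lambda>\<omega>. \<Omega>1 \<omega> \<union> \<Omega>2 \<omega>) (\<lambda>\<omega>. (QA \<omega>, \<Omega>2 \<omega>))
      = cond_entropy (cond_pmf \<mu> {\<omega>. \<Omega> \<omega> = {1..K} - P2}) (\<lambda>\<omega>. restrict (\<lambda>k. W k \<omega>) ({1..K} - P2)) (\<lambda>\<omega>. (QA \<omega>, \<Omega> \<omega>))
     \<and> mutual_info (cond_pmf \<mu> {\<omega>. \<Omega>2 \<omega> = P2}) E (\<lambda>\<omega>. (QA \<omega>, \<Omega>2 \<omega>))
      = mutual_info (cond_pmf \<mu> {\<omega>. \<Omega> \<omega> = {1..K} - P2}) (\<lambda>\<omega>. restrict (\<lambda>k. W k \<omega>) ({1..K} - ({1..K} - P2))) (\<lambda>\<omega>. (QA \<omega>, \<Omega> \<omega>))"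
    if P2: "P2 \<in> \<Omega>2 ` ?S" for P2
  proof -
    obtain \<omega>0 where w0: "\<omega>0 \<in> ?S" "\<Omega>2 \<omega>0 = P2" using P2 by blast
    have P2K: "P2 \<subseteq> {1..K}" using sub w0 by blast
    have ne: "?S \<inter> {\<omega>. \<Omega>2 \<omega> = P2} \<noteq> {}" using w0 by blast
    have ev: "{\<omega>. \<Omega>2 \<omega> = P2} \<inter> ?S = {\<omega>. \<Omega> \<omega> = {1..K} - P2} \<inter> ?S"
    proof (intro set_eqI iffI)
      fix \<omega> assume "\<omega> \<in> {\<omega>. \<Omega> \<omega> = {1..K} - P2} \<inter> ?S"
      then have a: "{1..K} - \<Omega>2 \<omega> = {1..K} - P2" "\<Omega>2 \<omega> \<subseteq> {1..K}" "\<omega> \<in> ?S"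
        using sub unfolding \<Omega>_def by auto
      have "\<Omega>2 \<omega> = P2" using diff_inj_aux[OF a(1) a(2) P2K] .
      then show "\<omega> \<in> {\<omega>. \<Omega>2 \<omega> = P2} \<inter> ?S" using a by blast
    qed (auto simp: \<Omega>_def)
    have cc: "cond_pmf \<mu> {\<omega>. \<Omega> \<omega> = {1..K} - P2} = cond_pmf \<mu> {\<omega>. \<Omega>2 \<omega> = P2}"
      by (rule cond_pmf_cong'[symmetric, OF ne ev])
    define \<mu>' where "\<mu>' = cond_pmf \<mu> {\<omega>. \<Omega>2 \<omega> = P2}"
    have S': "set_pmf \<mu>' = ?S \<inter> {\<omega>. \<Omega>2 \<omega> = P2}" unfolding \<mu>'_def using ne by simp
    have gi: "inj_on (\<lambda>(a, b). (a, {1..K} - b)) ((\<lambda>\<omega>. (QA \<omega>, \<Omega>2 \<omega>)) ` set_pmf \<mu>')"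
      unfolding S' by (auto simp: inj_on_def)
    have gY: "\<And>\<omega>. \<omega> \<in> set_pmf \<mu>' \<Longrightarrow> (QA \<omega>, \<Omega> \<omega>) = (\<lambda>(a, b). (a, {1..K} - b)) (QA \<omega>, \<Omega>2 \<omega>)"
      by (simp add: \<Omega>_def)
    have fi: "inj_on (\<lambda>U. restrict (\<lambda>k. if k \<in> U then 1 else (0::nat)) ({1..K} - P2)) ((\<lambda>\<omega>. \<Omega>1 \<omega> \<union> \<Omega>2 \<omega>) ` set_pmf \<mu>')"
    proof (rule inj_onI)
      fix U V assume U: "U \<in> (\<lambda>\<omega>. \<Omega>1 \<omega> \<union> \<Omega>2 \<omega>) ` set_pmf \<mu>'" and V: "V \<in> (\<lambda>\<omega>. \<Omega>1 \<omega> \<union> \<Omega>2 \<omega>) ` set_pmf \<mu>'"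
        and h: "restrict (\<lambda>k. if k \<in> U then 1 else (0::nat)) ({1..K} - P2) = restrict (\<lambda>k. if k \<in> V then 1 else (0::nat)) ({1..K} - P2)"
      have "P2 \<subseteq> U" "U \<subseteq> {1..K}" "P2 \<subseteq> V" "V \<subseteq> {1..K}" using U V sub P2K unfolding S' by auto
      then show "U = V" using restr_inj[OF h] by blast
    qed
    have fX: "\<And>\<omega>. \<omega> \<in> set_pmf \<mu>' \<Longrightarrow> restrict (\<lambda>k. W k \<omega>) ({1..K} - P2) = (\<lambda>U. restrict (\<lambda>k. if k \<in> U then 1 else (0::nat)) ({1..K} - P2)) (\<Omega>1 \<omega> \<union> \<Omega>2 \<omega>)"
      unfolding S' W_def by (auto simp: restrict_def fun_eq_iff)
    have fX2: "\<And>\<omega>. \<omega> \<in> set_pmf \<mu>' \<Longrightarrow> restrict (\<lambda>k. W k \<omega>) ({1..K} - ({1..K} - P2)) = id (E \<omega>)"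
      unfolding S' W_def E_def using P2K by (auto simp: restrict_def fun_eq_iff double_diff)
    have r1: "cond_entropy \<mu>' (\<lambda>\<omega>. restrict (\<lambda>k. W k \<omega>) ({1..K} - P2)) (\<lambda>\<omega>. (QA \<omega>, \<Omega> \<omega>)) = cond_entropy \<mu>' (\<lambda>\<omega>. \<Omega>1 \<omega> \<union> \<Omega>2 \<omega>) (\<lambda>\<omega>. (QA \<omega>, \<Omega>2 \<omega>))"
      by (rule conjunct1[OF info_inj[OF fi gi]]) (rule fX, assumption, rule gY, assumption)
    have i0: "inj_on id (E ` set_pmf \<mu>')" by simp
    have r2: "mutual_info \<mu>' (\<lambda>\<omega>. restrict (\<lambda>k. W k \<omega>) ({1..K} - ({1..K} - P2))) (\<lambda>\<omega>. (QA \<omega>, \<Omega> \<omega>)) = mutual_info \<mu>' E (\<lambda>\<omega>. (QA \<omega>, \<Omega>2 \<omega>))"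
      by (rule conjunct2[OF info_inj[OF i0 gi]]) (rule fX2, assumption, rule gY, assumption)
    show ?thesis unfolding cc \<mu>'_def[symmetric] by (intro conjI r1[symmetric] r2[symmetric])
  qed
  have e2: "mutual_info \<mu> \<Omega>2 (\<lambda>\<omega>. (Q n \<omega>, A n \<omega>, \<Omega>1 \<omega>, RS \<omega>))
      = mutual_info \<mu> \<Omega> (\<lambda>\<omega>. (Q n \<omega>, A n \<omega>, restrict (\<lambda>k. W k \<omega>) {1..K}, RS \<omega>))" for n
  proof -
    have fi: "inj_on (\<lambda>U. {1..K} - U) (\<Omega>2 ` ?S)"
    proof (rule inj_onI)
      fix U V assume "U \<in> \<Omega>2 ` ?S" "V \<in> \<Omega>2 ` ?S" "{1..K} - U = {1..K} - V"
      then show "U = V" using sub diff_inj_aux[of "{1..K}" U V] by blast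
    qed
    let ?g = "\<lambda>(q, a, U, r). (q, a, restrict (\<lambda>k. if k \<in> U then 1 else (0::nat)) {1..K}, r)"
    have gi: "inj_on ?g ((\<lambda>\<omega>. (Q n \<omega>, A n \<omega>, \<Omega>1 \<omega>, RS \<omega>)) ` ?S)"
    proof (rule inj_onI)
      fix x y assume x: "x \<in> (\<lambda>\<omega>. (Q n \<omega>, A n \<omega>, \<Omega>1 \<omega>, RS \<omega>)) ` ?S"
        and y: "y \<in> (\<lambda>\<omega>. (Q n \<omega>, A n \<omega>, \<Omega>1 \<omega>, RS \<omega>)) ` ?S" and h: "?g x = ?g y"
      obtain \<omega> where w: "\<omega> \<in> ?S" "x = (Q n \<omega>, A n \<omega>, \<Omega>1 \<omega>, RS \<omega>)" using x by blast
      obtain \<omega>' where w': "\<omega>' \<in> ?S" "y = (Q n \<omega>', A n \<omega>', \<Omega>1 \<omega>', RS \<omega>')" using y by blast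
      have eq: "Q n \<omega> = Q n \<omega>'" "A n \<omega> = A n \<omega>'" "RS \<omega> = RS \<omega>'"
        and kk: "\<forall>k\<in>{1..K}. k \<in> \<Omega>1 \<omega> \<longleftrightarrow> k \<in> \<Omega>1 \<omega>'"
        using h unfolding w(2) w'(2) by (auto simp: restrict_def fun_eq_iff split: if_splits)
      have "\<Omega>1 \<omega> \<subseteq> {1..K}" "\<Omega>1 \<omega>' \<subseteq> {1..K}" using sub w w' by auto
      then have "\<Omega>1 \<omega> = \<Omega>1 \<omega>'" using kk by blast
      then show "x = y" using eq w(2) w'(2) by simp
    qed
    have fX: "\<And>\<omega>. \<omega> \<in> ?S \<Longrightarrow> \<Omega> \<omega> = (\<lambda>U. {1..K} - U) (\<Omega>2 \<omega>)" by (simp add: \<Omega>_def)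
    have gY: "\<And>\<omega>. \<omega> \<in> ?S \<Longrightarrow> (Q n \<omega>, A n \<omega>, restrict (\<lambda>k. W k \<omega>) {1..K}, RS \<omega>) = ?g (Q n \<omega>, A n \<omega>, \<Omega>1 \<omega>, RS \<omega>)"
      by (simp add: W_def)
    have r: "mutual_info \<mu> \<Omega> (\<lambda>\<omega>. (Q n \<omega>, A n \<omega>, restrict (\<lambda>k. W k \<omega>) {1..K}, RS \<omega>)) = mutual_info \<mu> \<Omega>2 (\<lambda>\<omega>. (Q n \<omega>, A n \<omega>, \<Omega>1 \<omega>, RS \<omega>))"
      by (rule conjunct2[OF info_inj[OF fi gi]]) (rule fX, assumption, rule gY, assumption)
    show ?thesis by (rule r[symmetric])
  qed
  have Aeq: "(\<forall>P\<in>\<Omega> ` ?S. Pr P) \<longleftrightarrow> (\<forall>P2\<in>\<Omega>2 ` ?S. Pr ({1..K} - P2))" for Pr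
    unfolding imgO by simp
  have i1: "(\<forall>P2 \<in> \<Omega>2 ` ?S. cond_entropy (cond_pmf \<mu> {\<omega>. \<Omega>2 \<omega> = P2}) (\<lambda>\<omega>. \<Omega>1 \<omega> \<union> \<Omega>2 \<omega>) (\<lambda>\<omega>. (QA \<omega>, \<Omega>2 \<omega>)) = 0)
     \<longleftrightarrow> (\<forall>P \<in> \<Omega> ` ?S. cond_entropy (cond_pmf \<mu> {\<omega>. \<Omega> \<omega> = P}) (\<lambda>\<omega>. restrict (\<lambda>k. W k \<omega>) P) (\<lambda>\<omega>. (QA \<omega>, \<Omega> \<omega>)) = 0)"
    unfolding Aeq by (intro ball_cong refl) (simp only: conjunct1[OF per])
  have i3: "(\<forall>P2 \<in> \<Omega>2 ` ?S. mutual_info (cond_pmf \<mu> {\<omega>. \<Omega>2 \<omega> = P2}) E (\<lambda>\<omega>. (QA \<omega>, \<Omega>2 \<omega>)) = 0)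
     \<longleftrightarrow> (\<forall>P \<in> \<Omega> ` ?S. mutual_info (cond_pmf \<mu> {\<omega>. \<Omega> \<omega> = P}) (\<lambda>\<omega>. restrict (\<lambda>k. W k \<omega>) ({1..K} - P)) (\<lambda>\<omega>. (QA \<omega>, \<Omega> \<omega>)) = 0)"
    unfolding Aeq by (intro ball_cong refl) (simp only: conjunct2[OF per])
  have i2: "(\<forall>n\<in>{1..N1}. mutual_info \<mu> \<Omega>2 (\<lambda>\<omega>. (Q n \<omega>, A n \<omega>, \<Omega>1 \<omega>, RS \<omega>)) = 0)
     \<longleftrightarrow> (\<forall>n\<in>{1..N1}. mutual_info \<mu> \<Omega> (\<lambda>\<omega>. (Q n \<omega>, A n \<omega>, restrict (\<lambda>k. W k \<omega>) {1..K}, RS \<omega>)) = 0)"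
    by (intro ball_cong refl) (simp only: e2)
  show ?thesis by (simp only: i1 i2 i3)
qed

end
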